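(* Let $p$ be an odd prime. Then \[\sum_{i=1}^{(p-1)/2}\left(S_{2i}^*-S_{2i-1}^*\right)\equiv -1\pmod p.\]
   Context: For $u\in\mathbb{F}_p$ and $0\le\ell<p$, $S_\ell^*(u)=\{S\subseteq\mathbb{F}_p^* \mid \#S=\ell,\ \sum_{s\in S}s=u\}$, where $\mathbb{F}_p^*=\mathbb{F}_p\setminus\{0\}$ and sums are in $\mathbb{F}_p$. The cardinality $\#S_\ell^*(u)$ does not depend on $u\in\mathbb{F}_p^*$; this common integer value is denoted $S_\ell^*$. *)

theory Defs
  imports "HOL-Number_Theory.Number_Theory"
begin

text \<open>F_p is modelled by the residues {0..<p} (naturals), F_p^* by {1..<p};
  sums in F_p are natural-number sums taken mod p.\<close>

definition Sset :: "nat \<Rightarrow> nat \<Rightarrow> nat \<Rightarrow> nat set set" where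
  "Sset p l u = {S. S \<subseteq> {1..<p} \<and> card S = l \<and> (\<Sum>S) mod p = u}"

text \<open>The common value of card (Sset p l u) for u in F_p^*; we take u = 1.\<close>
definition Sstar :: "nat \<Rightarrow> nat \<Rightarrow> nat" where
  "Sstar p l = card (Sset p l 1)"

end

theory Submission
  imports Defs
begin

definition NS :: "nat \<Rightarrow> nat \<Rightarrow> nat \<Rightarrow> nat set set" where
  "NS p l u = {S. S \<subseteq> {0..<p} \<and> card S = l \<and> (\<Sum>S) mod p = u}"

lemma NS_finite: "finite (NS p l u)"
proof -
  have "NS p l u \<subseteq> Pow {0..<p}" unfolding NS_def by auto
  thus ?thesis by (rule finite_subset) simp
qed

lemma NS_shift:
  assumes p: "prime p" and l: "0 < l" "l < p" and v: "v < p"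
  shows "card (NS p l u) \<le> card (NS p l v)"
proof -
  have "coprime l p"
    using p l by (metis coprime_commute prime_imp_coprime_nat dvd_imp_le not_le)
  then obtain x where x: "[l * x = Suc 0] (mod p)" using cong_solve_coprime_nat by blast
  define t where "t = x * (v + p - u mod p)"
  define f where "f = (\<lambda>y. (y + t) mod p)"
  have p0: "p > 0" using l by simp
  have injf: "inj_on f {0..<p}"
  proof
    fix a b assume a: "a \<in> {0..<p}" and b: "b \<in> {0..<p}" and e: "f a = f b"
    have "[a + t = b + t] (mod p)" using e unfolding f_def cong_def .
    hence "[a = b] (mod p)" by (simp add: cong_add_rcancel_nat)
    thus "a = b" using a b by (simp add: cong_def)
  qed
  have lt: "(l * t) mod p = (v + p - u mod p) mod p"
  proof -
    have "(l * t) mod p = ((l * x) * (v + p - u mod p)) mod p" by (simp add: t_def mult.assoc)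
    also have "\<dots> = (((l * x) mod p) * (v + p - u mod p)) mod p" by (simp add: mod_mult_left_eq)
    also have "\<dots> = (v + p - u mod p) mod p" using x p0 unfolding cong_def
      by (metis mod_mult_left_eq mult_1 One_nat_def)
    finally show ?thesis .
  qed
  have img: "(`) f ` NS p l u \<subseteq> NS p l v"
  proof
    fix T assume "T \<in> (`) f ` NS p l u"
    then obtain S where S: "S \<in> NS p l u" and T: "T = f ` S" by blast
    have Ss: "S \<subseteq> {0..<p}" and Sc: "card S = l" and Su: "(\<Sum>S) mod p = u"
      using S unfolding NS_def by auto
    have injS: "inj_on f S" using injf Ss inj_on_subset by blast
    have "T \<subseteq> {0..<p}" using T p0 unfolding f_def by auto
    moreover have "card T = l" using T injS Sc card_image by blast
    moreover have "(\<Sum>T) mod p = v"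
    proof -
      have "\<Sum>T = (\<Sum>y\<in>S. f y)" using T injS by (simp add: sum.reindex)
      hence "(\<Sum>T) mod p = (\<Sum>y\<in>S. (y + t)) mod p" unfolding f_def by (simp add: mod_sum_eq)
      also have "\<dots> = (\<Sum>S + l * t) mod p" using Sc by (simp add: sum.distrib)
      also have "\<dots> = ((\<Sum>S) mod p + (l * t) mod p) mod p" by (simp add: mod_add_eq)
      also have "\<dots> = (u mod p + (v + p - u mod p)) mod p" using Su lt by (metis mod_add_right_eq mod_mod_trivial)
      also have "\<dots> = (v + p) mod p"
      proof -
        have "u mod p < p" using p0 by simp
        hence "u mod p + (v + p - u mod p) = v + p" by arith
        thus ?thesis by simp
      qed
      also have "\<dots> = v" using v by simp
      finally show ?thesis .
    qed
    ultimately show "T \<in> NS p l v" unfolding NS_def by blast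
  qed
  have inj: "inj_on ((`) f) (NS p l u)"
    by (rule inj_on_subset[OF inj_on_image_Pow[OF injf]]) (auto simp: NS_def)
  show ?thesis using card_inj_on_le[OF inj img NS_finite] .
qed

lemma NS_card:
  assumes p: "prime p" and l: "0 < l" "l < p"
  shows "p * card (NS p l 1) = p choose l"
proof -
  have p1: "1 < p" using p prime_gt_1_nat by blast
  have eq: "card (NS p l u) = card (NS p l 1)" if "u < p" for u
    using NS_shift[OF p l p1, of u] NS_shift[OF p l that, of 1] by simp
  have U: "{S. S \<subseteq> {0..<p} \<and> card S = l} = (\<Union>u\<in>{0..<p}. NS p l u)"
    unfolding NS_def using p1 by auto
  have "p choose l = card {S. S \<subseteq> {0..<p} \<and> card S = l}"
    using n_subsets[of "{0..<p}" l] by simp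
  also have "\<dots> = (\<Sum>u\<in>{0..<p}. card (NS p l u))"
    unfolding U by (rule card_UN_disjoint) (auto simp: NS_finite NS_def)
  also have "\<dots> = (\<Sum>u\<in>{0..<p}. card (NS p l 1))" using eq by simp
  also have "\<dots> = p * card (NS p l 1)" by simp
  finally show ?thesis by simp
qed

lemma NS_split:
  assumes l: "0 < l" and p1: "1 < p"
  shows "card (NS p l 1) = Sstar p l + Sstar p (l - 1)"
proof -
  have E: "NS p l 1 = Sset p l 1 \<union> insert 0 ` Sset p (l - 1) 1"
  proof (intro equalityI subsetI)
    fix S assume S: "S \<in> NS p l 1"
    hence Ss: "S \<subseteq> {0..<p}" and Sc: "card S = l" and Su: "(\<Sum>S) mod p = 1"
      unfolding NS_def by auto
    have fS: "finite S" using Ss finite_subset by blast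
    show "S \<in> Sset p l 1 \<union> insert 0 ` Sset p (l - 1) 1"
    proof (cases "0 \<in> S")
      case False
      have "S \<subseteq> {1..<p}"
      proof
        fix x assume "x \<in> S" thus "x \<in> {1..<p}" using Ss False by (cases x) auto
      qed
      thus ?thesis using Sc Su unfolding Sset_def by auto
    next
      case True
      have "S - {0} \<subseteq> {1..<p}" using Ss by auto
      moreover have "card (S - {0}) = l - 1" using Sc True fS by simp
      moreover have "\<Sum>(S - {0}) = \<Sum>S" using fS True by (simp add: sum.remove)
      ultimately have "S - {0} \<in> Sset p (l - 1) 1" using Su unfolding Sset_def by auto
      moreover have "S = insert 0 (S - {0})" using True by auto
      ultimately show ?thesis by blast
    qed
  next
    fix S assume "S \<in> Sset p l 1 \<union> insert 0 ` Sset p (l - 1) 1"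
    thus "S \<in> NS p l 1"
    proof
      assume "S \<in> Sset p l 1" thus ?thesis unfolding Sset_def NS_def by auto
    next
      assume "S \<in> insert 0 ` Sset p (l - 1) 1"
      then obtain T where T: "T \<in> Sset p (l - 1) 1" and S: "S = insert 0 T" by blast
      have Ts: "T \<subseteq> {1..<p}" and Tc: "card T = l - 1" and Tu: "(\<Sum>T) mod p = 1"
        using T unfolding Sset_def by auto
      have fT: "finite T" using Ts finite_subset by blast
      have n0: "0 \<notin> T" using Ts by auto
      have "S \<subseteq> {0..<p}" using S Ts p1 by auto
      moreover have "card S = l" using S fT n0 Tc l by simp
      moreover have "\<Sum>S = \<Sum>T" using S fT n0 by simp
      ultimately show ?thesis using Tu unfolding NS_def by auto
    qed
  qed
  have fin: "finite (Sset p k 1)" for k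
  proof -
    have "Sset p k 1 \<subseteq> Pow {1..<p}" unfolding Sset_def by auto
    thus ?thesis by (rule finite_subset) simp
  qed
  have inj: "inj_on (insert 0) (Sset p (l - 1) 1)"
  proof
    fix A B assume A: "A \<in> Sset p (l - 1) 1" and B: "B \<in> Sset p (l - 1) 1" and e: "insert 0 A = insert 0 B"
    have "0 \<notin> A" "0 \<notin> B" using A B unfolding Sset_def by auto
    hence "A = insert 0 A - {0}" "B = insert 0 B - {0}" by auto
    thus "A = B" using e by simp
  qed
  have disj: "Sset p l 1 \<inter> insert 0 ` Sset p (l - 1) 1 = {}"
    unfolding Sset_def by auto
  have "card (NS p l 1) = card (Sset p l 1) + card (insert 0 ` Sset p (l - 1) 1)"
    unfolding E by (rule card_Un_disjoint[OF fin finite_imageI[OF fin] disj])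
  also have "card (insert 0 ` Sset p (l - 1) 1) = card (Sset p (l - 1) 1)"
    by (rule card_image[OF inj])
  finally show ?thesis unfolding Sstar_def .
qed

lemma Sstar0: assumes "1 < p" shows "Sstar p 0 = 0"
proof -
  have "Sset p 0 1 = {}"
    unfolding Sset_def using assms by (auto dest: finite_subset)
  thus ?thesis unfolding Sstar_def by simp
qed

lemma Sstar_closed:
  assumes p: "prime p" and l: "l \<le> p - 1"
  shows "int p * int (Sstar p l) = int ((p - 1) choose l) - (-1)^l"
  using l
proof (induction l)
  case 0
  then show ?case using Sstar0 p prime_gt_1_nat by simp
next
  case (Suc l)
  have p1: "1 < p" using p prime_gt_1_nat by blast
  have "p * card (NS p (Suc l) 1) = p choose Suc l" using NS_card[OF p] Suc.prems by simp
  hence "p * (Sstar p (Suc l) + Sstar p l) = p choose Suc l" using NS_split[OF _ p1, of "Suc l"] by simp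
  hence "int p * int (Sstar p (Suc l)) + int p * int (Sstar p l) = int (p choose Suc l)"
    by (metis distrib_left of_nat_add of_nat_mult)
  moreover have "p choose Suc l = (p - 1 choose l) + (p - 1 choose Suc l)"
    using p1 by (metis Suc_diff_1 binomial_Suc_Suc less_trans zero_less_one)
  ultimately show ?case using Suc by simp
qed

lemma pair_sum:
  "(\<Sum>i=1..m. (f (2*i) - f (2*i - 1) :: int)) = (\<Sum>k=1..2*m. (-1)^k * f k)"
proof (induction m)
  case 0 then show ?case by simp
next
  case (Suc m)
  have "{1..2 * Suc m} = insert (2*m+2) (insert (2*m+1) {1..2*m})" by auto
  hence "(\<Sum>k=1..2*Suc m. (-1)^k * f k) = (-1)^(2*m+2) * f (2*m+2) + (-1)^(2*m+1) * f (2*m+1) + (\<Sum>k=1..2*m. (-1)^k * f k)"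
    by simp
  then show ?case using Suc by simp
qed

theorem proposition6:
  fixes p :: nat
  assumes "prime p" and "odd p"
  shows "[(\<Sum>i=1..(p - 1) div 2. int (Sstar p (2*i)) - int (Sstar p (2*i - 1))) = -1] (mod int p)"
proof -
  define m where "m = (p - 1) div 2"
  have p1: "1 < p" using assms prime_gt_1_nat by blast
  have pm: "p - 1 = 2 * m" using assms(2) p1 unfolding m_def by presburger
  define g where "g = (\<lambda>k. int (Sstar p k))"
  have "int p * (\<Sum>i=1..m. g (2*i) - g (2*i - 1)) = int p * (\<Sum>k=1..2*m. (-1)^k * g k)"
    using pair_sum[of g m] by simp
  also have "\<dots> = (\<Sum>k=1..2*m. (-1)^k * (int p * g k))"
    by (simp add: sum_distrib_left mult.left_commute)
  also have "\<dots> = (\<Sum>k=1..2*m. (-1)^k * (int ((p - 1) choose k) - (-1)^k))"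
    using Sstar_closed[OF assms(1)] pm unfolding g_def by (intro sum.cong) auto
  also have "\<dots> = (\<Sum>k=1..2*m. (-1)^k * int ((p - 1) choose k)) - 2 * int m"
    by (simp add: right_diff_distrib sum_subtractf power_mult_distrib[symmetric] flip: power_add)
  also have "(\<Sum>k=1..2*m. (-1)^k * int ((p - 1) choose k)) = -1"
  proof -
    have m0: "2 * m > 0" using pm p1 by simp
    have "(\<Sum>k\<le>2*m. (-1)^k * int (2*m choose k)) = 0" using choose_alternating_sum[OF m0] by simp
    moreover have "{..2*m} = insert 0 {1..2*m}" by auto
    ultimately show ?thesis using pm by simp
  qed
  finally have "int p * (\<Sum>i=1..m. g (2*i) - g (2*i - 1)) = int p * (-1)"
    using pm p1 by simp
  moreover have "int p \<noteq> 0" using p1 by simp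
  ultimately have "(\<Sum>i=1..m. g (2*i) - g (2*i - 1)) = -1" by (metis mult_cancel_left)
  thus ?thesis unfolding m_def g_def by simp
qed

end
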